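(* Let $F$ be a PLSEM-function whose Jacobian $\mathrm{D}F$ is lower triangular. Fix $l\in\{1,\dots,p\}$ and a constant orthogonal projection matrix $A\in\mathbb{R}^{p\times p}$. Let $S\subseteq\{1,\dots,p\}\setminus\{l\}$ and let $u,u_s:\mathbb{R}\to\mathbb{R}$ ($s\in S$) be twice continuously differentiable, with each $u_s'\not\equiv0$. If $$u\Big(x_l+\sum_{s\in S}u_s(x_s)\Big)=F(x)^t(\mathrm{Id}-A)\,\partial_lF(x)\quad\text{for all }x\in\mathbb{R}^p,$$ then $(\mathrm{Id}-A)\,\partial_l^2F\equiv0$.
   Context: A PLSEM with DAG $D$ on $\{1,\dots,p\}$ is a system $X_j=\mu_j+\sum_{i\in\mathrm{pa}_D(j)} f_{j,i}(X_i)+\varepsilon_j$, $j=1,\dots,p$, where $\mu_j\in\mathbb{R}$, $f_{j,i}\in C^2(\mathbb{R})$, $f_{j,i}\not\equiv 0$, $\mathbb{E}[f_{j,i}(X_i)]=0$, and $\varepsilon_1,\dots,\varepsilon_p$ are mutually independent with $\varepsilon_j\sim\mathcal{N}(0,\sigma_j^2)$, $\sigma_j^2>0$. Its PLSEM-function is $F(x)_j=\frac{1}{\sigma_j}\big(x_j-\mu_j-\sum_{i\in\mathrm{pa}_D(j)}f_{j,i}(x_i)\big)$. $\partial_lF$ and $\partial_l^2F$ denote the vectors of first and second partial derivatives of the components of $F$ in $x_l$. *)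

theory Defs
  imports "HOL-Probability.Probability"
begin

text \<open>Indices are 1..p; vectors in R^p are functions nat => real (only the
components 1..p are relevant); p x p matrices are functions nat => nat => real.\<close>

definition C2 :: "(real \<Rightarrow> real) \<Rightarrow> bool" where
  "C2 g \<longleftrightarrow> (\<exists>g' g''. (\<forall>t. (g has_real_derivative g' t) (at t))
                    \<and> (\<forall>t. (g' has_real_derivative g'' t) (at t))
                    \<and> continuous_on UNIV g'')"

definition pa :: "nat rel \<Rightarrow> nat \<Rightarrow> nat set" where
  "pa D j = {i. (i, j) \<in> D}"

definition is_DAG :: "nat \<Rightarrow> nat rel \<Rightarrow> bool" where
  "is_DAG p D \<longleftrightarrow> D \<subseteq> {1..p} \<times> {1..p} \<and> acyclic D"

definition noise_measure :: "nat \<Rightarrow> (nat \<Rightarrow> real) \<Rightarrow> (nat \<Rightarrow> real) measure" where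
  "noise_measure p sd = PiM {1..p} (\<lambda>j. density lborel (normal_density 0 (sd j)))"

text \<open>The (unique, by acyclicity) solution X of the structural equations for noise e.\<close>
definition PLSEM_solution ::
  "nat \<Rightarrow> nat rel \<Rightarrow> (nat \<Rightarrow> real) \<Rightarrow> (nat \<Rightarrow> nat \<Rightarrow> real \<Rightarrow> real) \<Rightarrow> (nat \<Rightarrow> real) \<Rightarrow> (nat \<Rightarrow> real)" where
  "PLSEM_solution p D mu f e =
     (THE x. (\<forall>j\<in>{1..p}. x j = mu j + (\<Sum>i\<in>pa D j. f j i (x i)) + e j)
           \<and> (\<forall>j. j \<notin> {1..p} \<longrightarrow> x j = 0))"

definition is_PLSEM ::
  "nat \<Rightarrow> nat rel \<Rightarrow> (nat \<Rightarrow> real) \<Rightarrow> (nat \<Rightarrow> nat \<Rightarrow> real \<Rightarrow> real) \<Rightarrow> (nat \<Rightarrow> real) \<Rightarrow> bool" where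
  "is_PLSEM p D mu f sd \<longleftrightarrow>
     is_DAG p D
     \<and> (\<forall>j\<in>{1..p}. sd j > 0)
     \<and> (\<forall>(i, j)\<in>D. C2 (f j i) \<and> (\<exists>t. f j i t \<noteq> 0))
     \<and> (\<forall>(i, j)\<in>D.
          integrable (noise_measure p sd) (\<lambda>e. f j i (PLSEM_solution p D mu f e i))
        \<and> (\<integral>e. f j i (PLSEM_solution p D mu f e i) \<partial>noise_measure p sd) = 0)"

definition PLSEM_fun ::
  "nat rel \<Rightarrow> (nat \<Rightarrow> real) \<Rightarrow> (nat \<Rightarrow> nat \<Rightarrow> real \<Rightarrow> real) \<Rightarrow> (nat \<Rightarrow> real) \<Rightarrow> (nat \<Rightarrow> real) \<Rightarrow> nat \<Rightarrow> real" where
  "PLSEM_fun D mu f sd x j = (x j - mu j - (\<Sum>i\<in>pa D j. f j i (x i))) / sd j"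

definition partial :: "nat \<Rightarrow> ((nat \<Rightarrow> real) \<Rightarrow> real) \<Rightarrow> (nat \<Rightarrow> real) \<Rightarrow> real" where
  "partial l g x = deriv (\<lambda>t. g (x(l := t))) (x l)"

definition jacobian_lower_triangular :: "nat \<Rightarrow> ((nat \<Rightarrow> real) \<Rightarrow> nat \<Rightarrow> real) \<Rightarrow> bool" where
  "jacobian_lower_triangular p F \<longleftrightarrow>
     (\<forall>x. \<forall>j\<in>{1..p}. \<forall>i\<in>{1..p}. j < i \<longrightarrow> partial i (\<lambda>y. F y j) x = 0)"

definition orth_projection :: "nat \<Rightarrow> (nat \<Rightarrow> nat \<Rightarrow> real) \<Rightarrow> bool" where
  "orth_projection p A \<longleftrightarrow>
     (\<forall>i\<in>{1..p}. \<forall>j\<in>{1..p}. A i j = A j i)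
     \<and> (\<forall>i\<in>{1..p}. \<forall>j\<in>{1..p}. (\<Sum>k\<in>{1..p}. A i k * A k j) = A i j)"

definition id_minus_mult :: "nat \<Rightarrow> (nat \<Rightarrow> nat \<Rightarrow> real) \<Rightarrow> (nat \<Rightarrow> real) \<Rightarrow> nat \<Rightarrow> real" where
  "id_minus_mult p A v i = v i - (\<Sum>k\<in>{1..p}. A i k * v k)"

end

theory Submission
  imports Defs
begin


lemma C2_D:
  assumes "C2 g"
  shows "(g has_real_derivative deriv g t) (at t)"
    and "(deriv g has_real_derivative deriv (deriv g) t) (at t)"
proof -
  obtain g' g'' where a: "\<forall>t. (g has_real_derivative g' t) (at t)"
    and b: "\<forall>t. (g' has_real_derivative g'' t) (at t)"
    using assms unfolding C2_def by blast
  have e: "deriv g = g'" using a by (auto intro!: ext DERIV_imp_deriv)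
  have e2: "deriv g' = g''" using b by (auto intro!: ext DERIV_imp_deriv)
  show "(g has_real_derivative deriv g t) (at t)" using a e by simp
  show "(deriv g has_real_derivative deriv (deriv g) t) (at t)" using b e e2 by simp
qed

lemma sum_upd:
  assumes "finite S"
  shows "(\<Sum>s\<in>S. g s ((x(k:=y)) s)) = (\<Sum>s\<in>S-{k}. g s (x s)) + (if k\<in>S then g k y else 0)"
proof (cases "k \<in> S")
  case True
  show ?thesis using True
    by (subst sum.remove[OF assms True]) (auto intro!: sum.cong simp: add.commute)
next
  case False
  then have "S - {k} = S" by auto
  then show ?thesis using False by (auto intro!: sum.cong simp: add.commute)
qed

lemma shift_lemma:
  fixes g g' \<alpha> \<beta> :: "real \<Rightarrow> real"
  assumes g: "\<And>z. (g has_real_derivative g' z) (at z)"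
    and a: "\<And>y. (\<alpha> has_real_derivative \<beta> y) (at y)"
    and b: "\<beta> y1 \<noteq> 0"
    and c: "\<And>T y. g (T + \<alpha> y) = g (T + \<alpha> 0)"
  shows "g' z = 0"
proof -
  let ?T = "z - \<alpha> y1"
  have d1: "((\<lambda>y. g (?T + \<alpha> y)) has_real_derivative g' (?T + \<alpha> y1) * \<beta> y1) (at y1)"
    by (rule DERIV_chain2[OF g]) (auto intro!: derivative_eq_intros a)
  have "(\<lambda>y. g (?T + \<alpha> y)) = (\<lambda>y. g (?T + \<alpha> 0))" using c by auto
  then have d2: "((\<lambda>y. g (?T + \<alpha> y)) has_real_derivative 0) (at y1)" by simp
  from DERIV_unique[OF d1 d2] b show ?thesis by simp
qed

lemma ode_lemma:
  fixes U H H2 :: "real \<Rightarrow> real"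
  assumes U: "\<And>y. (U has_real_derivative H y) (at y)"
    and H: "\<And>y. (H has_real_derivative H2 y) (at y)"
    and e: "\<And>y. H2 y = - \<kappa> * (H y)^2"
    and h0: "H y0 \<noteq> 0" and k: "\<kappa> \<noteq> 0"
  shows False
proof -
  define L where "L y = 1 / H y0 + \<kappa> * (y - y0)" for y
  define E where "E y = (H y * L y - 1) * exp (\<kappa> * U y)" for y
  have dE: "(E has_real_derivative 0) (at y)" for y
  proof -
    have "(E has_real_derivative
      (H2 y * L y + H y * \<kappa>) * exp (\<kappa> * U y) + (H y * L y - 1) * (exp (\<kappa> * U y) * (\<kappa> * H y))) (at y)"
      unfolding E_def L_def
      by (auto intro!: derivative_eq_intros U H)
    moreover have "(H2 y * L y + H y * \<kappa>) * exp (\<kappa> * U y) + (H y * L y - 1) * (exp (\<kappa> * U y) * (\<kappa> * H y)) = 0"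
      unfolding e by (simp add: algebra_simps power2_eq_square)
    ultimately show ?thesis by simp
  qed
  define y1 where "y1 = y0 - 1 / (\<kappa> * H y0)"
  have "E y1 = E y0" using DERIV_isconst_all[of E y1 y0] dE by blast
  moreover have "E y0 = 0" unfolding E_def L_def using h0 by simp
  moreover have "L y1 = 0" unfolding L_def y1_def using h0 k by (simp add: field_simps)
  then have "E y1 = - exp (\<kappa> * U y1)" unfolding E_def by simp
  ultimately show False by simp
qed



locale ctx =
  fixes p l :: nat and D :: "nat rel" and mu sd :: "nat \<Rightarrow> real"
    and f :: "nat \<Rightarrow> nat \<Rightarrow> real \<Rightarrow> real"
    and A :: "nat \<Rightarrow> nat \<Rightarrow> real" and S :: "nat set"
    and u :: "real \<Rightarrow> real" and us :: "nat \<Rightarrow> real \<Rightarrow> real"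
  assumes Dsub: "D \<subseteq> {1..p} \<times> {1..p}" and acyc: "acyclic D"
    and sdpos: "\<forall>j\<in>{1..p}. sd j > 0"
    and fC2: "\<forall>(i, j)\<in>D. C2 (f j i)"
    and lower: "jacobian_lower_triangular p (PLSEM_fun D mu f sd)"
    and lmem: "l \<in> {1..p}"
    and Asym: "\<forall>i\<in>{1..p}. \<forall>j\<in>{1..p}. A i j = A j i"
    and Aidem: "\<forall>i\<in>{1..p}. \<forall>j\<in>{1..p}. (\<Sum>k\<in>{1..p}. A i k * A k j) = A i j"
    and Ssub: "S \<subseteq> {1..p} - {l}"
    and uC2: "C2 u"
    and usC: "\<forall>s\<in>S. C2 (us s) \<and> (\<exists>t. deriv (us s) t \<noteq> 0)"
    and eq: "\<forall>x. u (x l + (\<Sum>s\<in>S. us s (x s))) =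
               (\<Sum>i\<in>{1..p}. PLSEM_fun D mu f sd x i *
                  id_minus_mult p A (\<lambda>j. partial l (\<lambda>y. PLSEM_fun D mu f sd y j) x) i)"
begin

abbreviation "FF \<equiv> PLSEM_fun D mu f sd"

definition Dm :: "nat \<Rightarrow> nat \<Rightarrow> real \<Rightarrow> real" where
  "Dm m j t = ((if j = m then 1 else 0) - (if m \<in> pa D j then deriv (f j m) t else 0)) / sd j"

definition Dm2 :: "nat \<Rightarrow> nat \<Rightarrow> real \<Rightarrow> real" where
  "Dm2 m j t = - (if m \<in> pa D j then deriv (deriv (f j m)) t else 0) / sd j"

lemma fin_pa: "finite (pa D j)"
proof -
  have "pa D j \<subseteq> {1..p}" using Dsub unfolding pa_def by auto
  then show ?thesis by (rule finite_subset) simp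
qed

lemma C2_pa: "i \<in> pa D j \<Longrightarrow> C2 (f j i)"
  using fC2 unfolding pa_def by auto

lemma not_pa_self: "j \<notin> pa D j"
  using acyc unfolding pa_def acyclic_irrefl irrefl_def by auto

lemma F_deriv: "((\<lambda>t. FF (x(m:=t)) j) has_real_derivative Dm m j t) (at t)"
proof -
  have h1: "((\<lambda>t. (x(m:=t)) j) has_real_derivative (if j = m then 1 else 0)) (at t)"
    by (cases "j = m") auto
  have h2: "((\<lambda>t. \<Sum>i\<in>pa D j. f j i ((x(m:=t)) i)) has_real_derivative
             (\<Sum>i\<in>pa D j. (if i = m then deriv (f j i) t else 0))) (at t)"
  proof (rule DERIV_sum)
    fix i assume i: "i \<in> pa D j"
    show "((\<lambda>t. f j i ((x(m:=t)) i)) has_real_derivative (if i = m then deriv (f j i) t else 0)) (at t)"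
      using C2_D(1)[OF C2_pa[OF i]] by (cases "i = m") auto
  qed
  have e: "(\<Sum>i\<in>pa D j. (if i = m then deriv (f j i) t else 0)) = (if m \<in> pa D j then deriv (f j m) t else 0)"
    using fin_pa by (simp add: sum.delta)
  have "((\<lambda>t. ((x(m:=t)) j - mu j - (\<Sum>i\<in>pa D j. f j i ((x(m:=t)) i))) / sd j) has_real_derivative
      (((if j = m then 1 else 0) - 0 - (\<Sum>i\<in>pa D j. (if i = m then deriv (f j i) t else 0))) / sd j)) (at t)"
    by (intro DERIV_cdivide DERIV_diff h1 h2 DERIV_const)
  then show ?thesis unfolding PLSEM_fun_def Dm_def e by simp
qed

lemma partial_F: "partial m (\<lambda>y. FF y j) x = Dm m j (x m)"
  unfolding partial_def using F_deriv[of x m j "x m"] by (simp add: DERIV_imp_deriv)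

lemma Dm_deriv: "(Dm l j has_real_derivative Dm2 l j t) (at t)"
proof (cases "l \<in> pa D j")
  case True
  have "((\<lambda>t. ((if j = l then 1 else 0) - deriv (f j l) t) / sd j) has_real_derivative
        (0 - deriv (deriv (f j l)) t) / sd j) (at t)"
    by (intro DERIV_cdivide DERIV_diff DERIV_const C2_D(2)[OF C2_pa[OF True]])
  then show ?thesis using True unfolding Dm_def Dm2_def by simp
next
  case False
  then show ?thesis unfolding Dm_def Dm2_def by simp
qed

lemma partial2_F: "partial l (\<lambda>y. partial l (\<lambda>z. FF z j) y) x = Dm2 l j (x l)"
  unfolding partial_F unfolding partial_def using Dm_deriv[of j "x l"] by (simp add: DERIV_imp_deriv)

definition q :: "nat \<Rightarrow> real \<Rightarrow> real" where
  "q j t = Dm l j t - (\<Sum>k\<in>{1..p}. A j k * Dm l k t)"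
definition qd :: "nat \<Rightarrow> real \<Rightarrow> real" where
  "qd j t = Dm2 l j t - (\<Sum>k\<in>{1..p}. A j k * Dm2 l k t)"

lemma q_deriv: "(q j has_real_derivative qd j t) (at t)"
  unfolding q_def[abs_def] qd_def
  by (intro DERIV_diff DERIV_sum DERIV_cmult Dm_deriv)

lemma eq': "u (x l + (\<Sum>s\<in>S. us s (x s))) = (\<Sum>i\<in>{1..p}. FF x i * q i (x l))"
  using eq unfolding id_minus_mult_def partial_F q_def by simp

lemma goal': "id_minus_mult p A (\<lambda>j. partial l (\<lambda>y. partial l (\<lambda>z. FF z j) y) x) i = qd i (x l)"
  unfolding id_minus_mult_def partial2_F qd_def by simp

definition dF :: "nat \<Rightarrow> real \<Rightarrow> real \<Rightarrow> nat \<Rightarrow> real" where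
  "dF k y y0 i = ((if i = k then y - y0 else 0) - (if k \<in> pa D i then f i k y - f i k y0 else 0)) / sd i"

lemma F_diff: "FF (x(k:=y)) i - FF (x(k:=y0)) i = dF k y y0 i"
proof -
  have "(\<Sum>m\<in>pa D i. f i m ((x(k:=y)) m)) - (\<Sum>m\<in>pa D i. f i m ((x(k:=y0)) m))
      = (\<Sum>m\<in>pa D i. (if m = k then f i k y - f i k y0 else 0))"
    by (subst sum_subtractf[symmetric]) (auto intro!: sum.cong)
  also have "\<dots> = (if k \<in> pa D i then f i k y - f i k y0 else 0)"
    using fin_pa by (simp add: sum.delta)
  finally have s: "(\<Sum>m\<in>pa D i. f i m ((x(k:=y)) m)) - (\<Sum>m\<in>pa D i. f i m ((x(k:=y0)) m))
      = (if k \<in> pa D i then f i k y - f i k y0 else 0)" .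
  have "FF (x(k:=y)) i - FF (x(k:=y0)) i =
     (((x(k:=y)) i - (x(k:=y0)) i) - ((\<Sum>m\<in>pa D i. f i m ((x(k:=y)) m)) - (\<Sum>m\<in>pa D i. f i m ((x(k:=y0)) m)))) / sd i"
    unfolding PLSEM_fun_def by (simp add: diff_divide_distrib[symmetric] algebra_simps)
  also have "\<dots> = dF k y y0 i" unfolding s dF_def by simp
  finally show ?thesis .
qed

lemma low1:
  assumes "i < k" "i \<in> {1..p}" "k \<in> {1..p}"
  shows "dF k y y0 i = 0"
proof -
  have z: "Dm k i t = 0" for t
    using lower assms unfolding jacobian_lower_triangular_def partial_F
    by (metis fun_upd_same)
  have "FF ((\<lambda>_. 0)(k:=y)) i = FF ((\<lambda>_. 0)(k:=y0)) i"
    using DERIV_isconst_all[of "\<lambda>t. FF ((\<lambda>_. 0)(k:=t)) i" y y0] F_deriv z by metis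
  then show ?thesis using F_diff[of "\<lambda>_. 0" k y i y0] by simp
qed

lemma low2: "dF k y y0 k = (y - y0) / sd k"
  unfolding dF_def using not_pa_self by simp

lemma low3:
  assumes "j \<in> {1..p}" "j \<le> l"
  shows "Dm2 l j t = 0"
proof (cases "j = l")
  case True then show ?thesis unfolding Dm2_def using not_pa_self by simp
next
  case False
  then have "j < l" using assms by simp
  then have z: "Dm l j = (\<lambda>_. 0)"
    using lower assms lmem unfolding jacobian_lower_triangular_def partial_F
    by (metis fun_upd_same ext)
  have "(Dm l j has_real_derivative 0) (at t)" unfolding z by simp
  from DERIV_unique[OF Dm_deriv this] show ?thesis .
qed

lemma finS: "finite S" using Ssub by (metis finite_atLeastAtMost finite_Diff finite_subset)

lemma key_gen:
  assumes "k \<in> {1..p}" "k \<noteq> l"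
  shows "u (x l + (\<Sum>s\<in>S-{k}. us s (x s)) + (if k\<in>S then us k y else 0))
       - u (x l + (\<Sum>s\<in>S-{k}. us s (x s)) + (if k\<in>S then us k y0 else 0))
       = (\<Sum>i\<in>{1..p}. dF k y y0 i * q i (x l))"
proof -
  have e1: "u (x l + (\<Sum>s\<in>S-{k}. us s (x s)) + (if k\<in>S then us k y else 0))
     = (\<Sum>i\<in>{1..p}. FF (x(k:=y)) i * q i (x l))"
    using eq'[of "x(k:=y)"] assms sum_upd[OF finS, of us x k y] by (simp add: add.assoc)
  have e0: "u (x l + (\<Sum>s\<in>S-{k}. us s (x s)) + (if k\<in>S then us k y0 else 0))
     = (\<Sum>i\<in>{1..p}. FF (x(k:=y0)) i * q i (x l))"
    using eq'[of "x(k:=y0)"] assms sum_upd[OF finS, of us x k y0] by (simp add: add.assoc)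
  have "(\<Sum>i\<in>{1..p}. FF (x(k:=y)) i * q i (x l)) - (\<Sum>i\<in>{1..p}. FF (x(k:=y0)) i * q i (x l))
     = (\<Sum>i\<in>{1..p}. (FF (x(k:=y)) i - FF (x(k:=y0)) i) * q i (x l))"
    by (simp add: sum_subtractf[symmetric] left_diff_distrib)
  then show ?thesis unfolding e1 e0 F_diff .
qed

lemma downward:
  assumes a: "a \<ge> 1" and h: "\<forall>m\<in>{a..p}. (\<Sum>i\<in>{1..p}. dF m 1 0 i * z i) = 0"
  shows "m \<in> {a..p} \<Longrightarrow> z m = 0"
proof (induction "p - m" arbitrary: m rule: less_induct)
  case less
  have m1: "m \<in> {1..p}" using less.prems a by auto
  have t: "dF m 1 0 i * z i = (if i = m then z m / sd m else 0)" if i: "i \<in> {1..p}" for i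
  proof -
    consider "i < m" | "i = m" | "i > m" by linarith
    then show ?thesis
    proof cases
      case 1 then show ?thesis using low1[OF 1 i m1] by simp
    next
      case 2 then show ?thesis using low2 by simp
    next
      case 3
      then have "z i = 0" using less.hyps[of i] less.prems i by auto
      then show ?thesis using 3 by simp
    qed
  qed
  have "(\<Sum>i\<in>{1..p}. dF m 1 0 i * z i) = (\<Sum>i\<in>{1..p}. (if i = m then z m / sd m else 0))"
    using t by (rule sum.cong[OF refl])
  also have "\<dots> = z m / sd m" using m1 by (simp add: sum.delta)
  finally have "z m / sd m = 0" using h less.prems by simp
  moreover have "sd m > 0" using sdpos m1 by blast
  ultimately show ?case by simp
qed

lemma sum_collapse:
  assumes m1: "k \<in> {1..p}" and z: "\<forall>i\<in>{k+1..p}. z i = 0"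
  shows "(\<Sum>i\<in>{1..p}. dF k y y0 i * z i) = (y - y0) / sd k * z k"
proof -
  have t: "dF k y y0 i * z i = (if i = k then (y - y0) / sd k * z k else 0)" if i: "i \<in> {1..p}" for i
  proof -
    consider "i < k" | "i = k" | "i > k" by linarith
    then show ?thesis
    proof cases
      case 1 then show ?thesis using low1[OF 1 i m1] by simp
    next
      case 2 then show ?thesis using low2 by simp
    next
      case 3
      then have "z i = 0" using z i by auto
      then show ?thesis using 3 by simp
    qed
  qed
  have "(\<Sum>i\<in>{1..p}. dF k y y0 i * z i) = (\<Sum>i\<in>{1..p}. (if i = k then (y - y0) / sd k * z k else 0))"
    using t by (rule sum.cong[OF refl])
  also have "\<dots> = (y - y0) / sd k * z k" using m1 by (simp add: sum.delta)
  finally show ?thesis .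
qed

abbreviation "G \<equiv> deriv u"
abbreviation "G2 \<equiv> deriv (deriv u)"

lemma Gd: "(u has_real_derivative G t) (at t)" "(G has_real_derivative G2 t) (at t)"
  using C2_D[OF uC2] by auto

lemma u_shift: "((\<lambda>t. u (t + a + b)) has_real_derivative G (t + a + b)) (at t)"
proof -
  have "((\<lambda>t. t + a + b) has_real_derivative 1) (at t)" by (auto intro!: derivative_eq_intros)
  from DERIV_chain2[OF Gd(1) this] show ?thesis by simp
qed

lemma xt_sum: "(\<Sum>s\<in>T. us s ((\<lambda>s. if s = l then t else 0) s)) = (\<Sum>s\<in>T. us s 0)" if "T \<subseteq> S"
  using that Ssub by (intro sum.cong) auto

lemma cstar:
  assumes k: "k \<in> {1..p}" "k \<noteq> l" and c: "k \<notin> S \<or> (\<forall>z. G2 z = 0)"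
  shows "(\<Sum>i\<in>{1..p}. dF k y y0 i * qd i t) = 0"
proof -
  define c where "c = (\<Sum>s\<in>S-{k}. us s 0)"
  define c1 where "c1 = (if k\<in>S then us k y else 0)"
  define c0 where "c0 = (if k\<in>S then us k y0 else 0)"
  have e: "u (t + c + c1) - u (t + c + c0) = (\<Sum>i\<in>{1..p}. dF k y y0 i * q i t)" for t
    using key_gen[OF k, of "\<lambda>s. if s = l then t else 0" y y0] xt_sum[of "S-{k}" t]
    unfolding c_def c1_def c0_def by simp
  have d1: "((\<lambda>t. u (t + c + c1) - u (t + c + c0)) has_real_derivative G (t + c + c1) - G (t + c + c0)) (at t)"
    by (intro DERIV_diff u_shift)
  have d2: "((\<lambda>t. \<Sum>i\<in>{1..p}. dF k y y0 i * q i t) has_real_derivative (\<Sum>i\<in>{1..p}. dF k y y0 i * qd i t)) (at t)"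
    by (intro DERIV_sum DERIV_cmult q_deriv)
  have "G (t + c + c1) - G (t + c + c0) = 0"
  proof (cases "k \<in> S")
    case False then show ?thesis unfolding c1_def c0_def by simp
  next
    case True
    then have "\<forall>z. G2 z = 0" using c by simp
    then have "G a = G b" for a b using DERIV_isconst_all[of G a b] Gd(2) by metis
    then show ?thesis by simp
  qed
  with DERIV_unique[OF d2 d1[unfolded e]] show ?thesis by simp
qed

lemma u_sh1: "((\<lambda>t. u (t + a)) has_real_derivative G (t + a)) (at t)"
  using u_shift[of a 0 t] by simp

lemma G_sh1: "((\<lambda>t. G (t + a)) has_real_derivative G2 (t + a)) (at t)"
proof -
  have "((\<lambda>t. t + a) has_real_derivative 1) (at t)" by (auto intro!: derivative_eq_intros)
  from DERIV_chain2[OF Gd(2) this] show ?thesis by simp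
qed

lemma usd: assumes "s \<in> S"
  shows "(us s has_real_derivative deriv (us s) t) (at t)"
    "(deriv (us s) has_real_derivative deriv (deriv (us s)) t) (at t)"
    "\<exists>y. deriv (us s) y \<noteq> 0"
  using C2_D[of "us s"] usC assms by auto

lemma twoelem:
  assumes s: "s1 \<in> S" "s2 \<in> S" "s1 \<noteq> s2"
  shows "G2 z = 0"
proof -
  define c where "c = (\<Sum>s\<in>S-{s1}-{s2}. us s 0)"
  have k1: "s1 \<in> {1..p}" "s1 \<noteq> l" "s2 \<noteq> l" using Ssub s by auto
  have e: "u (t + (c + us s2 b) + us s1 a) - u (t + (c + us s2 b) + us s1 0) = (\<Sum>i\<in>{1..p}. dF s1 a 0 i * q i t)" for t a b
  proof -
    have B: "(\<Sum>s\<in>S-{s1}. us s (((\<lambda>s. if s = l then t else 0)(s2:=b)) s)) = c + us s2 b"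
      using sum_upd[of "S-{s1}" us "\<lambda>s. if s = l then t else 0" s2 b] finS xt_sum[of "S-{s1}-{s2}" t] s
      unfolding c_def by auto
    show ?thesis
      using key_gen[OF k1(1,2), of "(\<lambda>s. if s = l then t else 0)(s2:=b)" a 0] k1 s unfolding B by simp
  qed
  have e2: "u (T + us s1 a + us s2 b) - u (T + us s1 a + us s2 0) = u (T + us s1 0 + us s2 b) - u (T + us s1 0 + us s2 0)" for T a b
    using e[where t="T - c" and a=a and b=b] e[where t="T - c" and a=a and b=0] by (simp add: algebra_simps)
  obtain y1 where y1: "deriv (us s1) y1 \<noteq> 0" using usd(3)[OF s(1)] by blast
  obtain y2 where y2: "deriv (us s2) y2 \<noteq> 0" using usd(3)[OF s(2)] by blast
  have g1: "G (w + us s2 b) - G (w + us s2 0) = 0" for w b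
  proof (rule shift_lemma[where g="\<lambda>w. u (w + us s2 b) - u (w + us s2 0)" and \<alpha>="us s1"
        and g'="\<lambda>w. G (w + us s2 b) - G (w + us s2 0)", OF _ usd(1)[OF s(1)] y1])
    show "((\<lambda>w. u (w + us s2 b) - u (w + us s2 0)) has_real_derivative G (z + us s2 b) - G (z + us s2 0)) (at z)" for z
      by (intro DERIV_diff u_sh1)
    show "u (T + us s1 y + us s2 b) - u (T + us s1 y + us s2 0) = u (T + us s1 0 + us s2 b) - u (T + us s1 0 + us s2 0)" for T y
      by (rule e2)
  qed
  show ?thesis
    by (rule shift_lemma[where g=G and \<alpha>="us s2", OF G_sh1[of 0, simplified] usd(1)[OF s(2)] y2])
       (use g1 in simp)
qed

lemma caseC:
  assumes S: "S = {k}" and k: "k \<in> {1..p}" "l < k"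
  shows "G2 z = 0"
proof -
  have kS: "k \<in> S" "k \<noteq> l" using S k by auto
  define xt where "xt t = (\<lambda>s::nat. if s = l then t else (0::real))" for t
  have qz: "q m t = 0" if m: "m \<in> {k+1..p}" for m t
  proof -
    have "\<forall>m\<in>{k+1..p}. (\<Sum>i\<in>{1..p}. dF m 1 0 i * q i t) = 0"
    proof
      fix m assume m: "m \<in> {k+1..p}"
      then have "m \<in> {1..p}" "m \<noteq> l" "m \<notin> S" using k S by auto
      from key_gen[OF this(1,2), of "xt t" 1 0] this(3) show "(\<Sum>i\<in>{1..p}. dF m 1 0 i * q i t) = 0"
        unfolding xt_def by simp
    qed
    from downward[of "k+1" "\<lambda>i. q i t", OF _ this] m show ?thesis by simp
  qed
  have qdz: "\<forall>i\<in>{k+1..p}. qd i t = 0" for t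
  proof
    fix m assume m: "m \<in> {k+1..p}"
    have "q m = (\<lambda>_. 0)" using qz[OF m] by auto
    then have "(q m has_real_derivative 0) (at t)" by simp
    from DERIV_unique[OF q_deriv this] show "qd m t = 0" .
  qed
  have Sk: "S - {k} = {}" using S by auto
  have c3: "u (t + us k y) - u (t + us k y0) = (y - y0) / sd k * q k t" for t y y0
  proof -
    have "(\<Sum>i\<in>{1..p}. dF k y y0 i * q i t) = (y - y0) / sd k * q k t"
      by (rule sum_collapse[OF k(1)]) (use qz in auto)
    then show ?thesis using key_gen[OF k(1) kS(2), of "xt t" y y0] kS unfolding xt_def Sk by simp
  qed
  define h where "h t = q k t / sd k" for t
  define U where "U = us k"
  define H where "H = deriv U"
  define H2 where "H2 = deriv H"
  have Ud: "(U has_real_derivative H y) (at y)" for y unfolding U_def H_def using usd(1)[OF kS(1)] .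
  have Hd: "(H has_real_derivative H2 y) (at y)" for y unfolding U_def H_def H2_def using usd(2)[OF kS(1)] .
  obtain y0 where y0: "H y0 \<noteq> 0" unfolding H_def U_def using usd(3)[OF kS(1)] by blast
  have c4: "G (t + U y) * H y = h t" for t y
  proof -
    have d1: "((\<lambda>y. u (t + U y) - u (t + U 0)) has_real_derivative G (t + U y) * H y) (at y)"
    proof -
      have "((\<lambda>y. t + U y) has_real_derivative H y) (at y)" by (auto intro!: derivative_eq_intros Ud)
      from DERIV_diff[OF DERIV_chain2[OF Gd(1) this] DERIV_const[of "u (t + U 0)" "at y"]] show ?thesis by simp
    qed
    have "(\<lambda>y. u (t + U y) - u (t + U 0)) = (\<lambda>y. y * h t)"
      using c3[of t _ 0] unfolding U_def h_def by auto
    moreover have "((\<lambda>y. y * h t) has_real_derivative h t) (at y)" by (auto intro!: derivative_eq_intros)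
    ultimately show ?thesis using DERIV_unique d1 by metis
  qed
  have hd: "(h has_real_derivative qd k t / sd k) (at t)" for t
    unfolding h_def[abs_def] by (intro DERIV_cdivide q_deriv)
  have c5: "G2 (t + U y) * H y = qd k t / sd k" for t y
  proof -
    have "h = (\<lambda>t. G (t + U y) * H y)" using c4 by auto
    moreover have "((\<lambda>t. G (t + U y) * H y) has_real_derivative G2 (t + U y) * H y) (at t)"
      by (intro DERIV_cmult_right G_sh1)
    ultimately show ?thesis using DERIV_unique hd by metis
  qed
  have c6: "G z * H2 y = - (G2 z * H y * H y)" for z y
  proof -
    have "(\<lambda>y. h (z - U y)) = (\<lambda>y. G z * H y)" proof
      fix y show "h (z - U y) = G z * H y" using c4[of "z - U y" y] by simp
    qed
    moreover have "((\<lambda>y. G z * H y) has_real_derivative G z * H2 y) (at y)"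
      by (intro DERIV_cmult Hd)
    moreover have "((\<lambda>y. h (z - U y)) has_real_derivative (qd k (z - U y) / sd k) * (- H y)) (at y)"
    proof -
      have "((\<lambda>y. z - U y) has_real_derivative - H y) (at y)" by (auto intro!: derivative_eq_intros Ud)
      from DERIV_chain2[OF hd this] show ?thesis .
    qed
    moreover have "qd k (z - U y) / sd k = G2 z * H y" using c5[of "z - U y" y] by simp
    ultimately show ?thesis using DERIV_unique by (metis mult_minus_right)
  qed
  show ?thesis
  proof (rule ccontr)
    assume nz: "G2 z \<noteq> 0"
    have Gz: "G z \<noteq> 0"
    proof
      assume "G z = 0"
      then have "G2 z * H y0 * H y0 = 0" using c6[of z y0] by simp
      with nz y0 show False by simp
    qed
    define \<kappa> where "\<kappa> = G2 z / G z"
    have e: "H2 y = - \<kappa> * (H y)^2" for y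
      using c6[of z y] Gz unfolding \<kappa>_def by (simp add: field_simps power2_eq_square)
    have "\<kappa> \<noteq> 0" using nz Gz unfolding \<kappa>_def by simp
    from ode_lemma[OF Ud Hd e y0 this] show False .
  qed
qed

lemma qd_high: "m \<in> {l+1..p} \<Longrightarrow> qd m t = 0"
proof -
  have "\<forall>k\<in>{l+1..p}. (\<Sum>i\<in>{1..p}. dF k 1 0 i * qd i t) = 0"
  proof
    fix k assume k: "k \<in> {l+1..p}"
    then have k1: "k \<in> {1..p}" "k \<noteq> l" "l < k" by auto
    have "k \<notin> S \<or> (\<forall>z. G2 z = 0)"
    proof (cases "k \<in> S")
      case True
      show ?thesis
      proof (cases "\<exists>s2\<in>S. s2 \<noteq> k")
        case True
        then obtain s2 where "s2 \<in> S" "s2 \<noteq> k" by blast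
        then have "\<forall>z. G2 z = 0" using twoelem[OF \<open>k \<in> S\<close>] by metis
        then show ?thesis by (rule disjI2)
      next
        case False
        then have "S = {k}" using True by blast
        then have "\<forall>z. G2 z = 0" using caseC k1(1,3) by metis
        then show ?thesis by (rule disjI2)
      qed
    qed simp
    from cstar[OF k1(1,2) this] show "(\<Sum>i\<in>{1..p}. dF k 1 0 i * qd i t) = 0" .
  qed
  from downward[of "l+1" "\<lambda>i. qd i t", OF _ this] show "m \<in> {l+1..p} \<Longrightarrow> qd m t = 0" by simp
qed

lemma main: "i \<in> {1..p} \<Longrightarrow> qd i t = 0"
proof -
  define v where "v j = Dm2 l j t" for j
  define w where "w j = qd j t" for j
  have w_def': "w j = v j - (\<Sum>k\<in>{1..p}. A j k * v k)" for j unfolding w_def v_def qd_def by simp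
  have Aw: "(\<Sum>j\<in>{1..p}. A k j * w j) = 0" if k: "k \<in> {1..p}" for k
  proof -
    have "(\<Sum>j\<in>{1..p}. A k j * w j) = (\<Sum>j\<in>{1..p}. A k j * v j) - (\<Sum>j\<in>{1..p}. \<Sum>m\<in>{1..p}. A k j * A j m * v m)"
      unfolding w_def' by (simp add: right_diff_distrib sum_subtractf sum_distrib_left mult.assoc)
    also have "(\<Sum>j\<in>{1..p}. \<Sum>m\<in>{1..p}. A k j * A j m * v m) = (\<Sum>m\<in>{1..p}. (\<Sum>j\<in>{1..p}. A k j * A j m) * v m)"
      by (subst sum.swap) (simp add: sum_distrib_right)
    also have "\<dots> = (\<Sum>m\<in>{1..p}. A k m * v m)" using Aidem k by simp
    finally show ?thesis by simp
  qed
  have s1: "(\<Sum>j\<in>{1..p}. w j * (\<Sum>k\<in>{1..p}. A j k * v k)) = 0"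
  proof -
    have "(\<Sum>j\<in>{1..p}. w j * (\<Sum>k\<in>{1..p}. A j k * v k)) = (\<Sum>j\<in>{1..p}. \<Sum>k\<in>{1..p}. v k * (A k j * w j))"
    proof (rule sum.cong[OF refl])
      fix j assume j: "j \<in> {1..p}"
      have "w j * (\<Sum>k\<in>{1..p}. A j k * v k) = (\<Sum>k\<in>{1..p}. w j * (A j k * v k))"
        by (rule sum_distrib_left)
      also have "\<dots> = (\<Sum>k\<in>{1..p}. v k * (A k j * w j))"
      proof (rule sum.cong[OF refl])
        fix k assume k: "k \<in> {1..p}"
        have "A j k = A k j" using Asym j k by blast
        then show "w j * (A j k * v k) = v k * (A k j * w j)" by simp
      qed
      finally show "w j * (\<Sum>k\<in>{1..p}. A j k * v k) = (\<Sum>k\<in>{1..p}. v k * (A k j * w j))" .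
    qed
    also have "\<dots> = (\<Sum>k\<in>{1..p}. v k * (\<Sum>j\<in>{1..p}. A k j * w j))"
      by (subst sum.swap) (simp add: sum_distrib_left)
    also have "\<dots> = 0" using Aw by simp
    finally show ?thesis .
  qed
  have s2: "(\<Sum>j\<in>{1..p}. w j * v j) = 0"
  proof (rule sum.neutral, rule ballI)
    fix j assume j: "j \<in> {1..p}"
    show "w j * v j = 0"
    proof (cases "j \<le> l")
      case True then show ?thesis using low3[OF j True] unfolding v_def by simp
    next
      case False then show ?thesis using qd_high[of j t] j unfolding w_def by simp
    qed
  qed
  have "(\<Sum>j\<in>{1..p}. w j * w j) = (\<Sum>j\<in>{1..p}. w j * v j) - (\<Sum>j\<in>{1..p}. w j * (\<Sum>k\<in>{1..p}. A j k * v k))"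
  proof -
    have "w j * w j = w j * v j - w j * (\<Sum>k\<in>{1..p}. A j k * v k)" for j
      using w_def'[of j] by (simp add: right_diff_distrib)
    then show ?thesis by (simp add: sum_subtractf)
  qed
  then have "(\<Sum>j\<in>{1..p}. w j * w j) = 0" using s1 s2 by simp
  then have "\<forall>j\<in>{1..p}. w j * w j = 0" by (subst (asm) sum_nonneg_eq_0_iff) auto
  moreover assume "i \<in> {1..p}"
  ultimately show "qd i t = 0" unfolding w_def by simp
qed

end

theorem mainTheorem13:
  fixes p l :: nat and D :: "nat rel" and mu sd :: "nat \<Rightarrow> real"
    and f :: "nat \<Rightarrow> nat \<Rightarrow> real \<Rightarrow> real"
    and A :: "nat \<Rightarrow> nat \<Rightarrow> real" and S :: "nat set"
    and u :: "real \<Rightarrow> real" and us :: "nat \<Rightarrow> real \<Rightarrow> real"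
  defines "F \<equiv> PLSEM_fun D mu f sd"
  assumes plsem: "is_PLSEM p D mu f sd"
    and lower: "jacobian_lower_triangular p F"
    and l: "l \<in> {1..p}"
    and A: "orth_projection p A"
    and S: "S \<subseteq> {1..p} - {l}"
    and u: "C2 u"
    and us: "\<forall>s\<in>S. C2 (us s) \<and> (\<exists>t. deriv (us s) t \<noteq> 0)"
    and eq: "\<forall>x. u (x l + (\<Sum>s\<in>S. us s (x s))) =
               (\<Sum>i\<in>{1..p}. F x i *
                  id_minus_mult p A (\<lambda>j. partial l (\<lambda>y. F y j) x) i)"
  shows "\<forall>x. \<forall>i\<in>{1..p}.
           id_minus_mult p A (\<lambda>j. partial l (\<lambda>y. partial l (\<lambda>z. F z j) y) x) i = 0"
  proof -
  from plsem have P: "D \<subseteq> {1..p} \<times> {1..p}" "acyclic D" "\<forall>j\<in>{1..p}. sd j > 0"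
      "\<forall>(i, j)\<in>D. C2 (f j i)"
    unfolding is_PLSEM_def is_DAG_def by auto
  interpret c: ctx p l D mu sd f A S u us
    using P lower l A S u us eq unfolding F_def orth_projection_def by unfold_locales auto
  show ?thesis unfolding F_def using c.goal' c.main by simp
qed

end
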